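(* Let $\phi:V\to V$ be a continuous coherency preserver that is not degenerate, with $\phi(0)=0$, $\varphi_0$ nonconstant, and $0$ generic. Then the map $\varphi_0:\mathcal{Q}\to\mathcal{Q}$ is injective.
   Context: Fix an integer $n\ge4$, let $V=\mathbb{R}^n$ with its standard topology and $q(x_1,\dots,x_n)=x_n^2-\sum_{k=1}^{n-1}x_k^2$. Points $x,y$ are coherent when $q(x-y)=0$; $\mathcal{C}(a)=\{m: q(m-a)=0\}$. A coherency preserver is a map $\phi:V\to V$ with $q(b-a)=0\Rightarrow q(\phi(b)-\phi(a))=0$; it is degenerate when its range is included in some $\mathcal{C}(c)$. Let $\mathcal{Q}=\{(x_1,\dots,x_{n-1},1): \sum_{k=1}^{n-1}x_k^2=1\}$. For a non-degenerate continuous coherency preserver $\phi$, for every $a\in V$ and $p\in\mathcal{Q}$ there is a unique $p'\in\mathcal{Q}$ with $\phi(a+\mathbb{R}p)\subset\phi(a)+\mathbb{R}p'$; one sets $\varphi_a(p):=p'$. Let $\mathcal{W}$ be the set of points $b\in V$ such that $\phi^{-1}(\{b\})$ has nonempty interior in $V$; a point $a$ is generic if $\phi(a)\notin\mathcal{W}$. *)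

theory Defs
  imports "HOL-Analysis.Analysis"
begin

text \<open>V = real^'n; the index t plays the role of the last ("time") coordinate x_n.\<close>

definition lq :: "'n::finite \<Rightarrow> real^'n \<Rightarrow> real" where
  "lq t x = (x $ t)^2 - (\<Sum>i\<in>UNIV - {t}. (x $ i)^2)"

definition coherent :: "'n::finite \<Rightarrow> real^'n \<Rightarrow> real^'n \<Rightarrow> bool" where
  "coherent t x y \<longleftrightarrow> lq t (x - y) = 0"

definition lcone :: "'n::finite \<Rightarrow> real^'n \<Rightarrow> (real^'n) set" where
  "lcone t a = {m. lq t (m - a) = 0}"

definition coherency_preserver :: "'n::finite \<Rightarrow> (real^'n \<Rightarrow> real^'n) \<Rightarrow> bool" where
  "coherency_preserver t \<phi> \<longleftrightarrow>
     (\<forall>a b. lq t (b - a) = 0 \<longrightarrow> lq t (\<phi> b - \<phi> a) = 0)"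

definition degenerate :: "'n::finite \<Rightarrow> (real^'n \<Rightarrow> real^'n) \<Rightarrow> bool" where
  "degenerate t \<phi> \<longleftrightarrow> (\<exists>c. range \<phi> \<subseteq> lcone t c)"

definition Qset :: "'n::finite \<Rightarrow> (real^'n) set" where
  "Qset t = {x. x $ t = 1 \<and> (\<Sum>i\<in>UNIV - {t}. (x $ i)^2) = 1}"

definition varphi :: "'n::finite \<Rightarrow> (real^'n \<Rightarrow> real^'n) \<Rightarrow> real^'n \<Rightarrow> real^'n \<Rightarrow> real^'n" where
  "varphi t \<phi> a p = (THE p'. p' \<in> Qset t \<and>
      \<phi> ` {a + s *\<^sub>R p | s. True} \<subseteq> {\<phi> a + s *\<^sub>R p' | s. True})"

definition Wset :: "(real^'n::finite \<Rightarrow> real^'n) \<Rightarrow> (real^'n) set" where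
  "Wset \<phi> = {b. interior (\<phi> -` {b}) \<noteq> {}}"

definition generic :: "(real^'n::finite \<Rightarrow> real^'n) \<Rightarrow> real^'n \<Rightarrow> bool" where
  "generic \<phi> a \<longleftrightarrow> \<phi> a \<notin> Wset \<phi>"

end

theory Submission
  imports Defs
begin


definition bf :: "'n::finite \<Rightarrow> real^'n \<Rightarrow> real^'n \<Rightarrow> real" where
  "bf t x y = x$t*y$t - (\<Sum>i\<in>UNIV-{t}. x$i*y$i)"

lemma lq_bf: "lq t x = bf t x x"
  by (simp add: lq_def bf_def power2_eq_square)
lemma bf_sym: "bf t x y = bf t y x" by (simp add: bf_def mult.commute)
lemma bf_add1: "bf t (x+y) z = bf t x z + bf t y z"
  by (simp add: bf_def algebra_simps sum.distrib)
lemma bf_diff1: "bf t (x-y) z = bf t x z - bf t y z"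
  by (simp add: bf_def algebra_simps sum_subtractf)
lemma bf_scale1: "bf t (a*\<^sub>R x) z = a * bf t x z"
  by (simp add: bf_def algebra_simps sum_distrib_left)
lemma bf_add2: "bf t z (x+y) = bf t z x + bf t z y"
  using bf_add1 bf_sym by metis
lemma bf_diff2: "bf t z (x-y) = bf t z x - bf t z y"
  using bf_diff1 bf_sym by metis
lemma bf_scale2: "bf t z (a*\<^sub>R x) = a * bf t z x"
  using bf_scale1 bf_sym by metis
lemma bf_zero1[simp]: "bf t 0 z = 0" by (simp add: bf_def)
lemma bf_zero2[simp]: "bf t z 0 = 0" by (simp add: bf_def)

lemmas bf_lin = bf_add1 bf_diff1 bf_scale1 bf_add2 bf_diff2 bf_scale2

lemma lq_diff: "lq t (x - y) = lq t x - 2 * bf t x y + lq t y"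
  by (simp add: lq_bf bf_lin bf_sym[of t y x])
lemma lq_add: "lq t (x + y) = lq t x + 2 * bf t x y + lq t y"
  by (simp add: lq_bf bf_lin bf_sym[of t y x])
lemma lq_scale: "lq t (a *\<^sub>R x) = a^2 * lq t x"
  by (simp add: lq_bf bf_lin power2_eq_square)

lemma Q_t: "p \<in> Qset t \<Longrightarrow> p$t = 1" by (simp add: Qset_def)
lemma Q_lq: "p \<in> Qset t \<Longrightarrow> lq t p = 0" by (simp add: Qset_def lq_def)
lemma Q_bf_self: "p \<in> Qset t \<Longrightarrow> bf t p p = 0" using Q_lq lq_bf by metis

lemma orth_sum:
  assumes "p \<in> Qset t" "bf t v p = 0"
  shows "- lq t v = (\<Sum>i\<in>UNIV-{t}. (v$i - v$t * p$i)^2)"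
proof -
  have s1: "(\<Sum>i\<in>UNIV-{t}. v$i*p$i) = v$t" using assms by (simp add: bf_def Qset_def)
  have s2: "(\<Sum>i\<in>UNIV-{t}. (p$i)^2) = 1" using assms by (simp add: Qset_def)
  have "(\<Sum>i\<in>UNIV-{t}. (v$i - v$t * p$i)^2)
      = (\<Sum>i\<in>UNIV-{t}. (v$i)^2 - 2*(v$t)*(v$i*p$i) + (v$t)^2*(p$i)^2)"
    by (rule sum.cong) (auto simp: power2_eq_square algebra_simps)
  also have "\<dots> = (\<Sum>i\<in>UNIV-{t}. (v$i)^2) - 2*(v$t)*(\<Sum>i\<in>UNIV-{t}. v$i*p$i)
       + (v$t)^2*(\<Sum>i\<in>UNIV-{t}. (p$i)^2)"
    by (simp add: sum.distrib sum_subtractf sum_distrib_left)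
  also have "\<dots> = (\<Sum>i\<in>UNIV-{t}. (v$i)^2) - (v$t)^2" using s1 s2 by (simp add: power2_eq_square)
  finally show ?thesis by (simp add: lq_def)
qed

lemma orth_null:
  assumes "p \<in> Qset t" "bf t v p = 0" "lq t v = 0"
  shows "v = v$t *\<^sub>R p"
proof -
  have "(\<Sum>i\<in>UNIV-{t}. (v$i - v$t * p$i)^2) = 0" using orth_sum[OF assms(1,2)] assms(3) by simp
  hence h: "\<forall>i\<in>UNIV-{t}. (v$i - v$t*p$i)^2 = 0" by (subst (asm) sum_nonneg_eq_0_iff) auto
  show ?thesis
  proof (subst vec_eq_iff, intro allI)
    fix i show "v$i = (v$t *\<^sub>R p)$i"
      using h Q_t[OF assms(1)] by (cases "i = t") auto
  qed
qed

lemma orth_neg: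
  assumes "p \<in> Qset t" "p' \<in> Qset t" "p \<noteq> p'" "bf t v p = 0" "bf t v p' = 0" "v \<noteq> 0"
  shows "lq t v < 0"
proof -
  have "lq t v \<le> 0" using orth_sum[OF assms(1,4)] by (smt (verit) sum_nonneg zero_le_power2)
  moreover have "lq t v \<noteq> 0"
  proof
    assume z: "lq t v = 0"
    have a: "v = v$t *\<^sub>R p" by (rule orth_null[OF assms(1,4) z])
    have b: "v = v$t *\<^sub>R p'" by (rule orth_null[OF assms(2,5) z])
    have "v$t \<noteq> 0" using a assms(6) by (metis scale_zero_left)
    then show False using a b assms(3) by (metis scaleR_cancel_left)
  qed
  ultimately show ?thesis by simp
qed

lemma Q_bf_pos:
  assumes "p \<in> Qset t" "r \<in> Qset t" "p \<noteq> r"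
  shows "bf t p r > 0"
proof -
  have e: "(\<Sum>i\<in>UNIV-{t}. (p$i - r$i)^2) = 2 * bf t p r"
  proof -
    have "(\<Sum>i\<in>UNIV-{t}. (p$i - r$i)^2) = (\<Sum>i\<in>UNIV-{t}. (p$i)^2 + (r$i)^2 - 2*(p$i*r$i))"
      by (rule sum.cong) (auto simp: power2_eq_square algebra_simps)
    also have "\<dots> = (\<Sum>i\<in>UNIV-{t}. (p$i)^2) + (\<Sum>i\<in>UNIV-{t}. (r$i)^2) - 2*(\<Sum>i\<in>UNIV-{t}. p$i*r$i)"
      by (simp add: sum.distrib sum_subtractf sum_distrib_left)
    finally show ?thesis using assms by (simp add: Qset_def bf_def)
  qed
  have "bf t p r \<ge> 0" using e by (smt (verit) sum_nonneg zero_le_power2)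
  moreover have "bf t p r \<noteq> 0"
  proof
    assume "bf t p r = 0"
    hence "(\<Sum>i\<in>UNIV-{t}. (p$i - r$i)^2) = 0" using e by simp
    hence h: "\<forall>i\<in>UNIV-{t}. (p$i - r$i)^2 = 0" by (subst (asm) sum_nonneg_eq_0_iff) auto
    have "p = r"
    proof (subst vec_eq_iff, intro allI)
      fix i show "p$i = r$i" using h Q_t[OF assms(1)] Q_t[OF assms(2)] by (cases "i = t") auto
    qed
    then show False using assms(3) by simp
  qed
  ultimately show ?thesis by simp
qed

lemma two_pts:
  assumes "r \<in> Qset t" "lq t (z - a *\<^sub>R r) = 0" "lq t (z - b *\<^sub>R r) = 0" "a \<noteq> b"
  shows "z = z$t *\<^sub>R r"
proof -
  have r0: "lq t r = 0" by (rule Q_lq[OF assms(1)])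
  have 1: "lq t z - 2 * a * bf t z r = 0" using assms(2) by (simp add: lq_diff lq_scale r0 bf_lin)
  have 2: "lq t z - 2 * b * bf t z r = 0" using assms(3) by (simp add: lq_diff lq_scale r0 bf_lin)
  have "(a - b) * bf t z r = 0" using 1 2 by (simp add: algebra_simps)
  hence o: "bf t z r = 0" using assms(4) by simp
  hence "lq t z = 0" using 1 by simp
  then show ?thesis using orth_null[OF assms(1) o] by simp
qed



lemma cont_bf: "continuous_on S (\<lambda>x. bf t x p)"
  unfolding bf_def by (intro continuous_intros)
lemma cont_lq: "continuous_on S (\<lambda>x. lq t x)"
  unfolding lq_def by (intro continuous_intros)

lemma lq_neg[simp]: "lq t (- x) = lq t x"
  by (simp add: lq_def)

lemma lq_zero_comp:
  assumes "lq t u = 0" "u$t = 0" shows "u = 0"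
proof -
  have "(\<Sum>i\<in>UNIV-{t}. (u$i)^2) = 0" using assms by (simp add: lq_def)
  hence h: "\<forall>i\<in>UNIV-{t}. (u$i)^2 = 0" by (subst (asm) sum_nonneg_eq_0_iff) auto
  show ?thesis
  proof (subst vec_eq_iff, intro allI)
    fix i show "u$i = 0$i" using h assms(2) by (cases "i = t") auto
  qed
qed

lemma line_img:
  assumes cp: "coherency_preserver t \<phi>" and z: "\<phi> 0 = 0" and q: "q \<in> Qset t"
    and nz: "\<phi> (s0 *\<^sub>R q) \<noteq> 0"
  shows "varphi t \<phi> 0 q \<in> Qset t \<and> (\<forall>s. \<phi> (s *\<^sub>R q) = (\<phi> (s *\<^sub>R q))$t *\<^sub>R varphi t \<phi> 0 q)"
proof -
  have cpr: "\<And>a b. lq t (b - a) = 0 \<Longrightarrow> lq t (\<phi> b - \<phi> a) = 0"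
    using cp unfolding coherency_preserver_def by blast
  have qq: "lq t q = 0" by (rule Q_lq[OF q])
  define u where "u = \<phi> (s0 *\<^sub>R q)"
  have lu: "lq t u = 0" using cpr[of 0 "s0 *\<^sub>R q"] by (simp add: u_def z lq_scale qq)
  have ut: "u$t \<noteq> 0" using lq_zero_comp[OF lu] nz u_def by auto
  define r where "r = (1 / u$t) *\<^sub>R u"
  have rt: "r$t = 1" using ut by (simp add: r_def)
  have su: "(\<Sum>i\<in>UNIV-{t}. (u$i)^2) = (u$t)^2" using lu by (simp add: lq_def)
  have "(\<Sum>i\<in>UNIV-{t}. (r$i)^2) = (\<Sum>i\<in>UNIV-{t}. (u$i)^2) / (u$t)^2"
    by (simp add: r_def power_divide sum_divide_distrib)
  hence "(\<Sum>i\<in>UNIV-{t}. (r$i)^2) = 1" using su ut by simp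
  hence rQ: "r \<in> Qset t" using rt by (simp add: Qset_def)
  have ur: "u = u$t *\<^sub>R r" using ut by (simp add: r_def)
  have img: "\<phi> (s *\<^sub>R q) = (\<phi> (s *\<^sub>R q))$t *\<^sub>R r" for s
  proof -
    have 1: "lq t (\<phi> (s *\<^sub>R q) - 0 *\<^sub>R r) = 0" using cpr[of 0 "s *\<^sub>R q"] by (simp add: z lq_scale qq)
    have "lq t (\<phi> (s *\<^sub>R q) - u) = 0"
      using cpr[of "s *\<^sub>R q" "s0 *\<^sub>R q"] by (simp add: u_def lq_scale qq flip: scaleR_diff_left)
    hence 2: "lq t (\<phi> (s *\<^sub>R q) - u$t *\<^sub>R r) = 0" using ur by simp
    show ?thesis using two_pts[OF rQ 1 2] ut by simp
  qed
  have vr: "varphi t \<phi> 0 q = r"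
    unfolding varphi_def
  proof (rule the_equality)
    show "r \<in> Qset t \<and> \<phi> ` {0 + s *\<^sub>R q |s. True} \<subseteq> {\<phi> 0 + s *\<^sub>R r |s. True}"
      using rQ img z by auto
  next
    fix p' assume a: "p' \<in> Qset t \<and> \<phi> ` {0 + s *\<^sub>R q |s. True} \<subseteq> {\<phi> 0 + s *\<^sub>R p' |s. True}"
    then obtain c where "u = c *\<^sub>R p'" using z unfolding u_def by auto
    hence "u$t = c" using Q_t[of p' t] a by simp
    then show "p' = r" using \<open>u = c *\<^sub>R p'\<close> ut by (simp add: r_def)
  qed
  show ?thesis using vr rQ img by simp
qed

lemma no_collapse:
  assumes cp: "coherency_preserver t \<phi>" and z: "\<phi> 0 = 0" and q: "q \<in> Qset t"
    and ct: "continuous_on UNIV \<phi>" and col: "\<forall>s. \<phi> (s *\<^sub>R q) = 0"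
  shows "degenerate t \<phi>"
proof -
  have cpr: "\<And>a b. lq t (b - a) = 0 \<Longrightarrow> lq t (\<phi> b - \<phi> a) = 0"
    using cp unfolding coherency_preserver_def by blast
  have qq: "lq t q = 0" by (rule Q_lq[OF q])
  have good: "lq t (\<phi> w) = 0" if "bf t w q \<noteq> 0" for w
  proof -
    define s where "s = lq t w / (2 * bf t w q)"
    have "lq t (w - s *\<^sub>R q) = 0" using that
      by (simp add: lq_diff lq_scale qq bf_lin s_def)
    then show ?thesis using cpr[of w "s *\<^sub>R q"] col by simp
  qed
  have cl: "closed {w. lq t (\<phi> w) = 0}"
    by (rule closed_Collect_eq) (auto intro!: continuous_on_compose2[OF cont_lq ct] continuous_intros)
  have all: "lq t (\<phi> w) = 0" for w
  proof (cases "bf t w q = 0")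
    case False then show ?thesis using good by blast
  next
    case True
    define ws where "ws = (\<lambda>n::nat. w + (1 / Suc n) *\<^sub>R axis t (1::real))"
    have ax: "bf t (axis t 1) q = 1" using Q_t[OF q] by (simp add: bf_def axis_def)
    have "\<forall>n. ws n \<in> {w. lq t (\<phi> w) = 0}"
      using good True ax by (simp add: ws_def bf_lin)
    moreover have "ws \<longlonglongrightarrow> w"
    proof -
      have "(\<lambda>n. 1 / real n) \<longlonglongrightarrow> 0" by (rule lim_const_over_n)
      hence "(\<lambda>n. 1 / real (Suc n)) \<longlonglongrightarrow> 0" by (rule LIMSEQ_Suc)
      hence "(\<lambda>n. w + (1 / real (Suc n)) *\<^sub>R axis t (1::real)) \<longlonglongrightarrow> w + 0 *\<^sub>R axis t 1"
        by (intro tendsto_intros)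
      then show ?thesis by (simp add: ws_def)
    qed
    ultimately have "w \<in> {w. lq t (\<phi> w) = 0}" using cl closed_sequentially by blast
    then show ?thesis by simp
  qed
  show ?thesis unfolding degenerate_def lcone_def using all by (intro exI[of _ 0]) auto
qed



lemma kernel_vec:
  fixes a b c :: "real^'n::finite"
  assumes "CARD('n) \<ge> 4"
  shows "\<exists>v::real^'n. v \<noteq> 0 \<and> bf t v a = 0 \<and> bf t v b = 0 \<and> bf t v c = 0"
proof (rule ccontr)
  assume na: "\<not> ?thesis"
  define L where "L = (\<lambda>v::real^'n. (bf t v a, bf t v b, bf t v c))"
  have lin: "linear L"
    by (rule linearI) (simp_all add: L_def bf_lin)
  have "inj L" unfolding linear_injective_0[OF lin]
    using na by (auto simp: L_def zero_prod_def)
  hence "dim (L ` UNIV) = dim (UNIV::(real^'n) set)"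
    by (intro dim_image_eq[OF lin]) (auto intro: inj_on_subset)
  hence "dim (L ` UNIV) = CARD('n)" by (simp add: dim_UNIV)
  moreover have "dim (L ` UNIV) \<le> DIM(real \<times> real \<times> real)"
    using dim_subset_UNIV by blast
  ultimately show False using assms by simp
qed



lemma realize:
  fixes p p' q :: "real^'n::finite"
  assumes card: "CARD('n) \<ge> 4" and Q: "p \<in> Qset t" "p' \<in> Qset t" "q \<in> Qset t"
    and d: "p \<noteq> p'" "p \<noteq> q" "p' \<noteq> q"
    and s: "\<sigma>1 \<noteq> 0" "\<sigma>2 \<noteq> 0" "\<sigma>3 \<noteq> 0"
  shows "\<exists>w. bf t w p \<noteq> 0 \<and> bf t w p' \<noteq> 0 \<and> bf t w q \<noteq> 0 \<and>
     lq t w / (2 * bf t w p) = \<sigma>1 \<and> lq t w / (2 * bf t w p') = \<sigma>2 \<and> lq t w / (2 * bf t w q) = \<sigma>3"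
proof -
  define k12 where "k12 = bf t p p'"
  define k13 where "k13 = bf t p q"
  define k23 where "k23 = bf t p' q"
  have k: "k12 > 0" "k13 > 0" "k23 > 0" using Q_bf_pos Q d unfolding k12_def k13_def k23_def by auto
  define c1 where "c1 = 1 / (2*\<sigma>1)"
  define c2 where "c2 = 1 / (2*\<sigma>2)"
  define c3 where "c3 = 1 / (2*\<sigma>3)"
  have c: "c1 \<noteq> 0" "c2 \<noteq> 0" "c3 \<noteq> 0" using s by (auto simp: c1_def c2_def c3_def)
  define \<gamma> where "\<gamma> = (k13*c2 + k23*c1 - k12*c3)/(2*k13*k23)"
  define \<alpha> where "\<alpha> = (c2 - \<gamma>*k23)/k12"
  define \<beta> where "\<beta> = (c1 - \<gamma>*k13)/k12"
  define w0 where "w0 = \<alpha> *\<^sub>R p + \<beta> *\<^sub>R p' + \<gamma> *\<^sub>R q"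
  have sy: "bf t p' p = k12" "bf t q p = k13" "bf t q p' = k23"
    by (simp_all add: k12_def k13_def k23_def bf_sym)
  have zz: "bf t p p = 0" "bf t p' p' = 0" "bf t q q = 0" using Q Q_bf_self by auto
  have b1: "bf t w0 p = c1"
    using k by (simp add: w0_def bf_lin sy zz \<beta>_def field_simps)
  have b2: "bf t w0 p' = c2"
    using k by (simp add: w0_def bf_lin sy zz \<alpha>_def k12_def[symmetric] field_simps)
  have b3: "bf t w0 q = c3"
  proof -
    have "bf t w0 q = \<alpha>*k13 + \<beta>*k23"
      by (simp add: w0_def bf_lin zz k13_def k23_def)
    also have "\<dots> = c3" using k by (simp add: \<alpha>_def \<beta>_def \<gamma>_def field_simps)
    finally show ?thesis .
  qed
  obtain v where v: "v \<noteq> 0" "bf t v p = 0" "bf t v p' = 0" "bf t v q = 0"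
    using kernel_vec[OF card] by blast
  have lv: "lq t v < 0" using orth_neg[OF Q(1,2) d(1) v(2,3,1)] .
  define v1 where "v1 = (1 / sqrt (- lq t v)) *\<^sub>R v"
  have lv1: "lq t v1 = -1"
    using lv by (simp add: v1_def lq_scale power_divide)
  have v1o: "bf t v1 p = 0" "bf t v1 p' = 0" "bf t v1 q = 0"
    using v by (simp_all add: v1_def bf_lin)
  have w0v: "bf t w0 v1 = 0"
    using v1o by (simp add: w0_def bf_lin bf_sym[of t _ v1])
  define q0 where "q0 = lq t w0"
  define lm where "lm = (if q0 > 0 then 1 / q0 else - 1 / (1 - q0))"
  have ln: "lm \<noteq> 0" by (simp add: lm_def)
  have lpos: "lm^2 * q0 - lm \<ge> 0"
  proof (cases "q0 > 0")
    case True then show ?thesis by (simp add: lm_def power2_eq_square)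
  next
    case False
    hence p1: "1 - q0 > 0" by simp
    have "lm^2 * q0 - lm = q0 / (1 - q0)^2 + 1 / (1 - q0)" using False by (simp add: lm_def power_divide)
    also have "\<dots> = q0 / (1 - q0)^2 + (1 - q0) / (1 - q0)^2"
      using p1 by (simp add: power2_eq_square)
    also have "\<dots> = 1 / (1-q0)^2" by (simp add: add_divide_distrib[symmetric])
    finally have "lm^2 * q0 - lm = 1 / (1 - q0)^2" .
    then show ?thesis by simp
  qed
  define \<mu> where "\<mu> = sqrt (lm^2 * q0 - lm)"
  have mu2: "\<mu>^2 = lm^2 * q0 - lm" using lpos by (simp add: \<mu>_def)
  define w where "w = lm *\<^sub>R w0 + \<mu> *\<^sub>R v1"
  have lw: "lq t w = lm"
    by (simp add: w_def lq_add lq_scale bf_lin w0v lv1 q0_def[symmetric] mu2)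
  have wp: "bf t w p = lm * c1" "bf t w p' = lm * c2" "bf t w q = lm * c3"
    by (simp_all add: w_def bf_lin b1 b2 b3 v1o)
  show ?thesis
    by (rule exI[of _ w]) (use ln c s in \<open>simp add: lw wp c1_def c2_def c3_def\<close>)
qed



lemma coh_pt:
  assumes "x \<in> Qset t" "bf t w x \<noteq> 0"
  shows "lq t (w - (lq t w / (2 * bf t w x)) *\<^sub>R x) = 0"
  using assms by (simp add: lq_diff lq_scale Q_lq bf_lin)

theorem lemma4p6:
  fixes \<phi> :: "real^'n::finite \<Rightarrow> real^'n" and t :: 'n
  assumes "CARD('n) \<ge> 4"
    and "continuous_on UNIV \<phi>"
    and "coherency_preserver t \<phi>"
    and "\<not> degenerate t \<phi>"
    and "\<phi> 0 = 0"
    and "\<exists>p\<in>Qset t. \<exists>p'\<in>Qset t. varphi t \<phi> 0 p \<noteq> varphi t \<phi> 0 p'"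
    and "generic \<phi> 0"
  shows "inj_on (varphi t \<phi> 0) (Qset t)"
proof (rule inj_onI, rule ccontr)
  fix p p' assume pQ: "p \<in> Qset t" and p'Q: "p' \<in> Qset t"
    and eq: "varphi t \<phi> 0 p = varphi t \<phi> 0 p'" and ne: "p \<noteq> p'"
  note cp = assms(3) and z = assms(5) and ct = assms(2)
  have cpr: "\<And>a b. lq t (b - a) = 0 \<Longrightarrow> lq t (\<phi> b - \<phi> a) = 0"
    using cp unfolding coherency_preserver_def by blast
  have nc: "\<exists>s. \<phi> (s *\<^sub>R x) \<noteq> 0" if "x \<in> Qset t" for x
    using no_collapse[OF cp z that ct] assms(4) by blast
  have LI: "varphi t \<phi> 0 x \<in> Qset t \<and> (\<forall>s. \<phi> (s *\<^sub>R x) = (\<phi> (s *\<^sub>R x))$t *\<^sub>R varphi t \<phi> 0 x)"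
    if "x \<in> Qset t" for x
    using nc[OF that] line_img[OF cp z that] by blast
  define r where "r = varphi t \<phi> 0 p"
  define F where "F = (\<lambda>x s. (\<phi> (s *\<^sub>R x))$t)"
  have Fc: "continuous_on UNIV (F x)" for x
    unfolding F_def
    by (intro continuous_on_component continuous_on_compose2[OF ct] continuous_intros) auto
  have F0: "F x 0 = 0" for x using z by (simp add: F_def)
  obtain q where qQ: "q \<in> Qset t" and qr: "varphi t \<phi> 0 q \<noteq> r"
    using assms(6) by (metis r_def)
  define r' where "r' = varphi t \<phi> 0 q"
  have rQ: "r \<in> Qset t" using LI[OF pQ] r_def by simp
  have r'Q: "r' \<in> Qset t" using LI[OF qQ] r'_def by simp
  have rr': "r \<noteq> r'" using qr r'_def by simp
  have imp: "\<phi> (s *\<^sub>R p) = F p s *\<^sub>R r" for s using LI[OF pQ] by (simp add: F_def r_def)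
  have imp': "\<phi> (s *\<^sub>R p') = F p' s *\<^sub>R r" for s using LI[OF p'Q] eq by (simp add: F_def r_def)
  have imq: "\<phi> (s *\<^sub>R q) = F q s *\<^sub>R r'" for s using LI[OF qQ] by (simp add: F_def r'_def)
  have qp: "q \<noteq> p" "q \<noteq> p'" using qr eq r_def by auto
  obtain \<sigma>1 where s1: "F p \<sigma>1 \<noteq> 0" using nc[OF pQ] imp by force
  have s1n: "\<sigma>1 \<noteq> 0" using s1 F0 by auto
  obtain \<sigma>3 where s3: "F q \<sigma>3 \<noteq> 0" using nc[OF qQ] imq by force
  have s3n: "\<sigma>3 \<noteq> 0" using s3 F0 by auto
  obtain \<delta> where dp: "\<delta> > 0" and dl: "\<forall>s. dist s 0 < \<delta> \<longrightarrow> dist (F p' s) (F p' 0) < \<bar>F p \<sigma>1\<bar>"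
    using Fc[of p'] s1 unfolding continuous_on_iff by (metis UNIV_I zero_less_abs_iff)
  define \<sigma>2 where "\<sigma>2 = \<delta> / 2"
  have s2n: "\<sigma>2 \<noteq> 0" using dp by (simp add: \<sigma>2_def)
  have s12: "F p \<sigma>1 \<noteq> F p' \<sigma>2"
  proof -
    have "\<bar>F p' \<sigma>2\<bar> < \<bar>F p \<sigma>1\<bar>" using dl[rule_format, of \<sigma>2] dp F0 by (simp add: \<sigma>2_def dist_real_def)
    then show ?thesis by auto
  qed
  obtain w where wA: "bf t w p \<noteq> 0" "bf t w p' \<noteq> 0" "bf t w q \<noteq> 0"
    and ws: "lq t w / (2 * bf t w p) = \<sigma>1" "lq t w / (2 * bf t w p') = \<sigma>2" "lq t w / (2 * bf t w q) = \<sigma>3"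
    using realize[OF assms(1) pQ p'Q qQ ne qp(1)[symmetric] qp(2)[symmetric] s1n s2n s3n] by blast
  define S where "S = (\<lambda>x w. lq t w / (2 * bf t w x))"
  define A where "A = {w. bf t w p \<noteq> 0 \<and> bf t w p' \<noteq> 0 \<and> bf t w q \<noteq> 0}"
  define G where "G = (\<lambda>w. (F p (S p w) - F p' (S p' w)) * F q (S q w))"
  have Aeq: "A = UNIV \<inter> (\<lambda>w. bf t w p * bf t w p' * bf t w q) -` (-{0})"
    by (auto simp: A_def)
  have Ao: "open A" unfolding Aeq
    by (rule continuous_open_preimage) (auto intro!: continuous_intros cont_bf)
  have Sc: "continuous_on A (S x)" if "x \<in> {p, p', q}" for x
    unfolding S_def using that
    by (intro continuous_intros cont_lq cont_bf) (auto simp: A_def)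
  have Gc: "continuous_on A G"
    unfolding G_def
    by (intro continuous_intros continuous_on_compose2[OF Fc Sc]) auto
  define U where "U = A \<inter> G -` (-{0})"
  have Uo: "open U" unfolding U_def by (rule continuous_open_preimage[OF Gc Ao]) auto
  have wU: "w \<in> U" using wA ws s12 s3 by (simp add: U_def A_def G_def S_def)
  have U0: "\<phi> w' = 0" if "w' \<in> U" for w'
  proof -
    have wa: "bf t w' p \<noteq> 0" "bf t w' p' \<noteq> 0" "bf t w' q \<noteq> 0" and gw: "G w' \<noteq> 0"
      using that by (auto simp: U_def A_def)
    have e1: "lq t (\<phi> w' - F p (S p w') *\<^sub>R r) = 0"
      using cpr[OF coh_pt[OF pQ wa(1)]] imp by (simp add: S_def)
    have e2: "lq t (\<phi> w' - F p' (S p' w') *\<^sub>R r) = 0"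
      using cpr[OF coh_pt[OF p'Q wa(2)]] imp' by (simp add: S_def)
    have e3: "lq t (\<phi> w' - F q (S q w') *\<^sub>R r') = 0"
      using cpr[OF coh_pt[OF qQ wa(3)]] imq by (simp add: S_def)
    have d12: "F p (S p w') \<noteq> F p' (S p' w')" and c3: "F q (S q w') \<noteq> 0"
      using gw by (auto simp: G_def)
    have ph: "\<phi> w' = (\<phi> w')$t *\<^sub>R r" by (rule two_pts[OF rQ e1 e2 d12])
    define a where "a = (\<phi> w')$t"
    define c where "c = F q (S q w')"
    have "lq t (a *\<^sub>R r - c *\<^sub>R r') = 0" using e3 ph by (simp add: a_def c_def)
    hence "- 2 * a * c * bf t r r' = 0"
      by (simp add: lq_diff lq_scale Q_lq[OF rQ] Q_lq[OF r'Q] bf_lin) (metis mult.commute mult.left_commute)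
    moreover have "bf t r r' > 0" by (rule Q_bf_pos[OF rQ r'Q rr'])
    ultimately have "a = 0" using c3 by (simp add: c_def)
    then show ?thesis using ph by (simp add: a_def)
  qed
  have "U \<subseteq> \<phi> -` {0}" using U0 by auto
  hence "U \<subseteq> interior (\<phi> -` {0})" using Uo by (rule interior_maximal)
  hence "interior (\<phi> -` {0}) \<noteq> {}" using wU by blast
  hence "\<phi> 0 \<in> Wset \<phi>" using z by (simp add: Wset_def)
  then show False using assms(7) by (simp add: generic_def)
qed

end
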